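(* Let $1\le b<\frac{n}{2}-1$. If $T$ is a tree attaining the maximum value of $M_1$ over $\mathcal{CT}^*_{n,b}$, or a tree attaining the maximum value of $M_2$ over $\mathcal{CT}^*_{n,b}$, then $T$ does not simultaneously contain a vertex of degree $2$ and a vertex of degree $3$.
   Context: A chemical tree is a tree with maximum degree at most $4$. A branching vertex is a vertex of degree greater than $2$. $\mathcal{CT}^*_{n,b}$ is the class of all $n$-vertex chemical trees with exactly $b$ branching vertices. $M_1(G)=\sum_v d_v^2$ and $M_2(G)=\sum_{uv\in E(G)}d_ud_v$, where $d_v$ is the degree of $v$. *)

theory Defs
  imports Complex_Main
begin

definition deg :: "nat set set \<Rightarrow> nat \<Rightarrow> nat" where
  "deg E v = card {u. {u, v} \<in> E}"

definition adj_rel :: "nat set set \<Rightarrow> (nat \<times> nat) set" where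
  "adj_rel E = {(u, v). {u, v} \<in> E}"

definition is_tree :: "nat \<Rightarrow> nat set set \<Rightarrow> bool" where
  "is_tree n E \<longleftrightarrow>
     n \<ge> 1 \<and>
     E \<subseteq> {e. \<exists>u v. e = {u, v} \<and> u \<noteq> v \<and> u < n \<and> v < n} \<and>
     card E = n - 1 \<and>
     (\<forall>u<n. \<forall>v<n. (u, v) \<in> (adj_rel E)\<^sup>*)"

definition chemical_tree :: "nat \<Rightarrow> nat set set \<Rightarrow> bool" where
  "chemical_tree n E \<longleftrightarrow> is_tree n E \<and> (\<forall>v<n. deg E v \<le> 4)"

definition num_branching :: "nat \<Rightarrow> nat set set \<Rightarrow> nat" where
  "num_branching n E = card {v. v < n \<and> deg E v > 2}"

definition CT_star :: "nat \<Rightarrow> nat \<Rightarrow> nat set set set" where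
  "CT_star n b = {E. chemical_tree n E \<and> num_branching n E = b}"

definition M1 :: "nat \<Rightarrow> nat set set \<Rightarrow> nat" where
  "M1 n E = (\<Sum>v<n. (deg E v)^2)"

definition M2 :: "nat \<Rightarrow> nat set set \<Rightarrow> nat" where
  "M2 n E = (\<Sum>(u, v) \<in> {(u, v). u < v \<and> v < n \<and> {u, v} \<in> E}. deg E u * deg E v)"

end

theory Submission
  imports Defs
begin


lemma adj_sym: "sym (adj_rel E)"
  unfolding adj_rel_def sym_def by (auto simp: insert_commute)

lemma rt_sym: "(x,y) \<in> (adj_rel E)\<^sup>* \<Longrightarrow> (y,x) \<in> (adj_rel E)\<^sup>*"
  using sym_rtrancl[OF adj_sym] unfolding sym_def by blast

lemma adj_mono: "E \<subseteq> F \<Longrightarrow> (adj_rel E)\<^sup>* \<subseteq> (adj_rel F)\<^sup>*"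
  unfolding adj_rel_def by (intro rtrancl_mono) auto

lemma R_eq: "(x,y) \<in> (adj_rel E)\<^sup>* \<Longrightarrow> (adj_rel E)\<^sup>* `` {x} = (adj_rel E)\<^sup>* `` {y}"
  using rt_sym rtrancl_trans by (metis Image_singleton_iff subsetI subset_antisym)

lemma merge:
  assumes "(x,y) \<in> (adj_rel (insert {p,q} E))\<^sup>*"
  shows "(x,y) \<in> (adj_rel E)\<^sup>* \<or> (x \<in> (adj_rel E)\<^sup>* `` {p,q} \<and> y \<in> (adj_rel E)\<^sup>* `` {p,q})"
  using assms
proof (induction rule: rtrancl_induct)
  case base then show ?case by simp
next
  case (step w z)
  from step.hyps(2) have e: "{w,z} = {p,q} \<or> (w,z) \<in> adj_rel E" unfolding adj_rel_def by auto
  show ?case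
  proof (cases "{w,z} = {p,q}")
    case True
    hence zw: "z = p \<or> z = q" "w = p \<or> w = q" by (auto simp: doubleton_eq_iff)
    hence zA: "z \<in> (adj_rel E)\<^sup>* `` {p,q}" by auto
    from step.IH show ?thesis
    proof
      assume "(x,w) \<in> (adj_rel E)\<^sup>*"
      hence "x \<in> (adj_rel E)\<^sup>* `` {p,q}" using zw(2) rt_sym by blast
      with zA show ?thesis by blast
    next
      assume "x \<in> (adj_rel E)\<^sup>* `` {p,q} \<and> w \<in> (adj_rel E)\<^sup>* `` {p,q}"
      then show ?thesis using zA by blast
    qed
  next
    case False
    with e have wz: "(w,z) \<in> adj_rel E" by blast
    from step.IH show ?thesis
    proof
      assume "(x,w) \<in> (adj_rel E)\<^sup>*" then show ?thesis using wz by (meson rtrancl.rtrancl_into_rtrancl)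
    next
      assume h: "x \<in> (adj_rel E)\<^sup>* `` {p,q} \<and> w \<in> (adj_rel E)\<^sup>* `` {p,q}"
      then have "z \<in> (adj_rel E)\<^sup>* `` {p,q}" using wz by (meson Image_iff rtrancl.rtrancl_into_rtrancl)
      with h show ?thesis by blast
    qed
  qed
qed

lemma count:
  assumes "finite E" "finite V" "\<forall>e\<in>E. \<exists>x y. e = {x,y} \<and> x \<noteq> y \<and> x \<in> V \<and> y \<in> V"
  shows "card V \<le> card E + card ((\<lambda>x. (adj_rel E)\<^sup>* `` {x}) ` V)"
  using assms(1,3)
proof (induction E rule: finite_induct)
  case empty
  have "adj_rel {} = {}" unfolding adj_rel_def by auto
  then have "(\<lambda>x. (adj_rel {})\<^sup>* `` {x}) ` V = (\<lambda>x. {x}) ` V" by simp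
  moreover have "card ((\<lambda>x. {x}) ` V) = card V" by (simp add: card_image)
  ultimately show ?case by simp
next
  case (insert e E)
  from insert.prems obtain p q where e: "e = {p,q}" "p \<in> V" "q \<in> V" by blast
  have IH: "card V \<le> card E + card ((\<lambda>x. (adj_rel E)\<^sup>* `` {x}) ` V)" using insert by blast
  define RE where "RE = (\<lambda>x. (adj_rel E)\<^sup>* `` {x})"
  define RF where "RF = (\<lambda>x. (adj_rel (insert e E))\<^sup>* `` {x})"
  define K where "K = RE ` V - {RE q}"
  define h where "h = (\<lambda>S. (adj_rel (insert e E))\<^sup>* `` S)"
  have sub: "(adj_rel E)\<^sup>* \<subseteq> (adj_rel (insert e E))\<^sup>*" by (rule adj_mono) auto
  have hR: "h (RE x) = RF x" for x
    unfolding h_def RE_def RF_def using sub by (auto intro: rtrancl_trans)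
  have hK: "h ` K \<subseteq> RF ` V" unfolding K_def using hR by auto
  have inj: "inj_on h K"
  proof (rule inj_onI)
    fix S T assume ST: "S \<in> K" "T \<in> K" "h S = h T"
    then obtain x y where xy: "x \<in> V" "y \<in> V" "S = RE x" "T = RE y" "RE x \<noteq> RE q" "RE y \<noteq> RE q"
      unfolding K_def by auto
    have "RF x = RF y" using hR ST xy by metis
    hence "(x,y) \<in> (adj_rel (insert e E))\<^sup>*" unfolding RF_def by auto
    from merge[OF this[unfolded e(1)]] show "S = T"
    proof
      assume "(x,y) \<in> (adj_rel E)\<^sup>*" then show ?thesis using R_eq xy unfolding RE_def by metis
    next
      assume A: "x \<in> (adj_rel E)\<^sup>* `` {p,q} \<and> y \<in> (adj_rel E)\<^sup>* `` {p,q}"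
      have "(q,x) \<notin> (adj_rel E)\<^sup>*" using R_eq xy(5) unfolding RE_def by metis
      moreover have "(q,y) \<notin> (adj_rel E)\<^sup>*" using R_eq xy(6) unfolding RE_def by metis
      ultimately have "(p,x) \<in> (adj_rel E)\<^sup>*" "(p,y) \<in> (adj_rel E)\<^sup>*" using A by auto
      then show ?thesis using R_eq xy unfolding RE_def by metis
    qed
  qed
  have fin: "finite (RF ` V)" using assms(2) by simp
  have "card K = card (h ` K)" using inj by (simp add: card_image)
  also have "\<dots> \<le> card (RF ` V)" using hK fin by (rule card_mono[rotated])
  finally have c1: "card K \<le> card (RF ` V)" .
  have "card (RE ` V) \<le> card K + 1"
  proof (cases "RE q \<in> RE ` V")
    case True
    have "finite (RE ` V)" using assms(2) by simp
    then have "card (RE ` V) = Suc (card (RE ` V - {RE q}))" using True by (rule card.remove)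
    then show ?thesis by (simp only: K_def)
  next
    case False
    then show ?thesis by (simp add: K_def)
  qed
  with c1 IH show ?case using insert.hyps unfolding RE_def RF_def by simp
qed


lemma tree_edges: "is_tree n E \<Longrightarrow> \<forall>e\<in>E. \<exists>x y. e = {x,y} \<and> x \<noteq> y \<and> x < n \<and> y < n"
  unfolding is_tree_def by blast

lemma edge_lt: "is_tree n E \<Longrightarrow> {x,y} \<in> E \<Longrightarrow> x < n \<and> y < n \<and> x \<noteq> y"
  using tree_edges[of n E] by (auto simp: doubleton_eq_iff)

lemma tree_finite: "is_tree n E \<Longrightarrow> finite E"
proof -
  assume t: "is_tree n E"
  have "E \<subseteq> Pow {..<n}" using tree_edges[OF t] by auto
  then show ?thesis by (rule finite_subset) simp
qed

lemma nbr_finite: "is_tree n E \<Longrightarrow> finite {y. {y,x} \<in> E}"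
proof -
  assume t: "is_tree n E"
  have "{y. {y,x} \<in> E} \<subseteq> {..<n}" using edge_lt[OF t] by auto
  then show ?thesis by (rule finite_subset) simp
qed

lemma tree_bridge:
  assumes t: "is_tree n E" and e: "{u,c} \<in> E"
  shows "(u,c) \<notin> (adj_rel (E - {{u,c}}))\<^sup>*"
proof
  assume reach: "(u,c) \<in> (adj_rel (E - {{u,c}}))\<^sup>*"
  define E0 where "E0 = E - {{u,c}}"
  have sub: "adj_rel E \<subseteq> (adj_rel E0)\<^sup>*"
  proof (rule subrelI)
    fix x y assume "(x,y) \<in> adj_rel E"
    then have xy: "{x,y} \<in> E" unfolding adj_rel_def by simp
    show "(x,y) \<in> (adj_rel E0)\<^sup>*"
    proof (cases "{x,y} = {u,c}")
      case True
      then have "(x = u \<and> y = c) \<or> (x = c \<and> y = u)" by (auto simp: doubleton_eq_iff)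
      then show ?thesis using reach rt_sym unfolding E0_def by blast
    next
      case False
      then have "(x,y) \<in> adj_rel E0" using xy unfolding E0_def adj_rel_def by simp
      then show ?thesis by blast
    qed
  qed
  then have all: "(adj_rel E)\<^sup>* \<subseteq> (adj_rel E0)\<^sup>*" by (rule rtrancl_subset_rtrancl)
  have n1: "n \<ge> 1" using t unfolding is_tree_def by simp
  have conn: "\<forall>x<n. (0,x) \<in> (adj_rel E0)\<^sup>*" using t all n1 unfolding is_tree_def by blast
  have img: "(\<lambda>x. (adj_rel E0)\<^sup>* `` {x}) ` {..<n} = {(adj_rel E0)\<^sup>* `` {0}}"
  proof
    show "(\<lambda>x. (adj_rel E0)\<^sup>* `` {x}) ` {..<n} \<subseteq> {(adj_rel E0)\<^sup>* `` {0}}"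
      using conn R_eq by (metis (no_types, lifting) image_subsetI lessThan_iff singletonI)
    show "{(adj_rel E0)\<^sup>* `` {0}} \<subseteq> (\<lambda>x. (adj_rel E0)\<^sup>* `` {x}) ` {..<n}"
      using n1 by auto
  qed
  have fin: "finite E0" using tree_finite[OF t] unfolding E0_def by simp
  have ok: "\<forall>e\<in>E0. \<exists>x y. e = {x,y} \<and> x \<noteq> y \<and> x \<in> {..<n} \<and> y \<in> {..<n}"
    using tree_edges[OF t] unfolding E0_def by auto
  have "card {..<n} \<le> card E0 + card ((\<lambda>x. (adj_rel E0)\<^sup>* `` {x}) ` {..<n})"
    by (rule count[OF fin _ ok]) simp
  then have "n \<le> card E0 + 1" using img by simp
  moreover have "card E0 = card E - 1" unfolding E0_def using e tree_finite[OF t] by simp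
  moreover have "card E = n - 1" using t unfolding is_tree_def by simp
  moreover have "card E \<ge> 1" using e tree_finite[OF t] by (metis One_nat_def Suc_leI card_gt_0_iff empty_iff)
  ultimately show False by linarith
qed

lemma split_reach:
  assumes "(u,x) \<in> (adj_rel E)\<^sup>*" "{u,a} \<in> E" "{u,c} \<in> E" "a \<noteq> c"
  shows "(u,x) \<in> (adj_rel (E - {{u,c}}))\<^sup>* \<or> (u,x) \<in> (adj_rel (E - {{u,a}}))\<^sup>*"
  using assms(1)
proof (induction rule: rtrancl_induct)
  case base then show ?case by simp
next
  case (step w z)
  from step.hyps(2) have wz: "{w,z} \<in> E" unfolding adj_rel_def by simp
  have ne: "{u,c} \<noteq> {u,a}" using assms(4) by (auto simp: doubleton_eq_iff)
  from step.IH show ?case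
  proof
    assume h: "(u,w) \<in> (adj_rel (E - {{u,c}}))\<^sup>*"
    show ?thesis
    proof (cases "{w,z} = {u,c}")
      case True
      then have "z = u \<or> (w = u \<and> z = c)" by (auto simp: doubleton_eq_iff)
      moreover have "(u,c) \<in> adj_rel (E - {{u,a}})" using assms(3) ne unfolding adj_rel_def by simp
      ultimately show ?thesis by blast
    next
      case False
      then have "(w,z) \<in> adj_rel (E - {{u,c}})" using wz unfolding adj_rel_def by simp
      then show ?thesis using h by (meson rtrancl.rtrancl_into_rtrancl)
    qed
  next
    assume h: "(u,w) \<in> (adj_rel (E - {{u,a}}))\<^sup>*"
    show ?thesis
    proof (cases "{w,z} = {u,a}")
      case True
      then have "z = u \<or> (w = u \<and> z = a)" by (auto simp: doubleton_eq_iff)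
      moreover have "(u,a) \<in> adj_rel (E - {{u,c}})" using assms(2) ne unfolding adj_rel_def by auto
      ultimately show ?thesis by blast
    next
      case False
      then have "(w,z) \<in> adj_rel (E - {{u,a}})" using wz unfolding adj_rel_def by simp
      then show ?thesis using h by (meson rtrancl.rtrancl_into_rtrancl)
    qed
  qed
qed

lemma M2_alt:
  assumes "\<forall>e\<in>E. \<exists>x y. e = {x,y} \<and> x \<noteq> y \<and> x < n \<and> y < n"
  shows "M2 n E = (\<Sum>e\<in>E. prod (deg E) e)"
proof -
  define P where "P = {(u, v). u < v \<and> v < n \<and> {u, v} \<in> E}"
  define h where "h = (\<lambda>(x::nat,y::nat). {x,y})"
  have bij: "bij_betw h P E"
    unfolding bij_betw_def
  proof
    show "inj_on h P"
      unfolding inj_on_def P_def h_def by (auto simp: doubleton_eq_iff)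
    show "h ` P = E"
    proof
      show "h ` P \<subseteq> E" unfolding P_def h_def by auto
      show "E \<subseteq> h ` P"
      proof
        fix e assume "e \<in> E"
        then obtain x y where xy: "e = {x,y}" "x \<noteq> y" "x < n" "y < n" using assms by blast
        show "e \<in> h ` P"
        proof (cases "x < y")
          case True
          then have "(x,y) \<in> P" using xy \<open>e \<in> E\<close> unfolding P_def by auto
          then show ?thesis using xy unfolding h_def by force
        next
          case False
          then have "(y,x) \<in> P" using xy \<open>e \<in> E\<close> unfolding P_def by (auto simp: insert_commute)
          then show ?thesis using xy unfolding h_def by (force simp: insert_commute)
        qed
      qed
    qed
  qed
  have "(\<Sum>e\<in>E. prod (deg E) e) = (\<Sum>p\<in>P. prod (deg E) (h p))"
    by (rule sym[OF sum.reindex_bij_betw[OF bij]])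
  also have "\<dots> = (\<Sum>(x,y)\<in>P. deg E x * deg E y)"
    by (rule sum.cong) (auto simp: P_def h_def)
  finally show ?thesis unfolding M2_def P_def by simp
qed


lemma improve:
  assumes ct: "chemical_tree n E" and u: "u < n" "deg E u = 2" and v: "v < n" "deg E v = 3"
    and a: "{a,u} \<in> E" and c: "{c,u} \<in> E" and ac: "a \<noteq> c"
    and reach: "(u,v) \<in> (adj_rel (E - {{u,c}}))\<^sup>*"
  shows "insert {v,c} (E - {{u,c}}) \<in> CT_star n (num_branching n E) \<and>
         M1 n E < M1 n (insert {v,c} (E - {{u,c}})) \<and> M2 n E < M2 n (insert {v,c} (E - {{u,c}}))"
proof -
  define E' where "E' = insert {v,c} (E - {{u,c}})"
  define D where "D = deg E"
  define D' where "D' = D(u:=1, v:=4)"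
  have t: "is_tree n E" using ct unfolding chemical_tree_def by simp
  have d4: "\<forall>x<n. D x \<le> 4" using ct unfolding chemical_tree_def D_def by simp
  have fin: "finite E" by (rule tree_finite[OF t])
  have Nfin: "\<And>x. finite {y. {y,x} \<in> E}" by (rule nbr_finite[OF t])
  have uc: "{u,c} \<in> E" using c by (simp add: insert_commute)
  have cu: "c \<noteq> u" "c < n" using edge_lt[OF t c] by auto
  have au: "a \<noteq> u" "a < n" using edge_lt[OF t a] by auto
  have uv: "u \<noteq> v" using u v by auto
  have br: "(u,c) \<notin> (adj_rel (E - {{u,c}}))\<^sup>*" by (rule tree_bridge[OF t uc])
  have vc: "v \<noteq> c" using br reach by blast
  have vcE: "{v,c} \<notin> E"
  proof
    assume "{v,c} \<in> E"
    moreover have "{v,c} \<noteq> {u,c}" using uv vc by (auto simp: doubleton_eq_iff)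
    ultimately have "(v,c) \<in> adj_rel (E - {{u,c}})" unfolding adj_rel_def by simp
    with reach br show False by (meson rtrancl.rtrancl_into_rtrancl)
  qed
  have cvE: "{c,v} \<notin> E" using vcE by (simp add: insert_commute)
  have Nu: "{y. {y,u} \<in> E} = {a,c}"
  proof (rule sym, rule card_subset_eq[OF Nfin])
    show "{a,c} \<subseteq> {y. {y,u} \<in> E}" using a c by simp
    show "card {a,c} = card {y. {y,u} \<in> E}" using ac u(2) unfolding deg_def by simp
  qed
  have Nu': "\<And>y. {y,u} \<in> E \<longleftrightarrow> y = a \<or> y = c" using Nu by blast
  have Nu'': "\<And>y. {u,y} \<in> E \<longleftrightarrow> y = a \<or> y = c" using Nu' by (simp add: insert_commute)
  have degpos: "\<And>x y. {y,x} \<in> E \<Longrightarrow> D x \<ge> 1"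
  proof -
    fix x y assume "{y,x} \<in> E"
    then have "y \<in> {y. {y,x} \<in> E}" by simp
    then have "card {y. {y,x} \<in> E} > 0" using Nfin[of x] by (metis card_gt_0_iff empty_iff)
    then show "D x \<ge> 1" unfolding D_def deg_def by simp
  qed
  have N': "\<And>x. {y. {y,x} \<in> E'} = {y. {y,x} = {v,c} \<or> ({y,x} \<in> E \<and> {y,x} \<noteq> {u,c})}"
    unfolding E'_def by auto
  have degE': "deg E' = D'"
  proof
    fix x
    consider "x = u" | "x = v" | "x = c" | "x \<noteq> u" "x \<noteq> v" "x \<noteq> c" by blast
    then show "deg E' x = D' x"
    proof cases
      case 1
      have "{y. {y,u} \<in> E'} = {a}"
        unfolding N' using Nu' uv cu ac by (auto simp: doubleton_eq_iff)
      then show ?thesis unfolding deg_def D'_def using 1 uv by simp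
    next
      case 2
      have "{y. {y,v} \<in> E'} = insert c {y. {y,v} \<in> E}"
        unfolding N' using uv vc by (auto simp: doubleton_eq_iff)
      moreover have "card (insert c {y. {y,v} \<in> E}) = 4"
        using cvE Nfin[of v] v(2) unfolding deg_def by simp
      ultimately show ?thesis unfolding deg_def D'_def using 2 by simp
    next
      case 3
      have "{y. {y,c} \<in> E'} = insert v ({y. {y,c} \<in> E} - {u})"
        unfolding N' using uv vc cu by (auto simp: doubleton_eq_iff)
      moreover have "card (insert v ({y. {y,c} \<in> E} - {u})) = card {y. {y,c} \<in> E}"
      proof -
        have "v \<notin> {y. {y,c} \<in> E} - {u}" using vcE by simp
        then have "card (insert v ({y. {y,c} \<in> E} - {u})) = Suc (card ({y. {y,c} \<in> E} - {u}))"
          using Nfin[of c] by simp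
        also have "\<dots> = card {y. {y,c} \<in> E}"
          using card.remove[OF Nfin[of c], of u] uc by simp
        finally show ?thesis .
      qed
      ultimately show ?thesis unfolding deg_def D'_def D_def using 3 cu vc by simp
    next
      case 4
      have "{y. {y,x} \<in> E'} = {y. {y,x} \<in> E}"
        unfolding N' using 4 by (auto simp: doubleton_eq_iff)
      then show ?thesis unfolding deg_def D'_def D_def using 4 by simp
    qed
  qed
  have E0sub: "(adj_rel (E - {{u,c}}))\<^sup>* \<subseteq> (adj_rel E')\<^sup>*" by (rule adj_mono) (auto simp: E'_def)
  have vcadj: "(v,c) \<in> adj_rel E'" unfolding E'_def adj_rel_def by simp
  have ucR: "(u,c) \<in> (adj_rel E')\<^sup>*" using reach E0sub vcadj by (meson rtrancl.rtrancl_into_rtrancl subsetD)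
  have subE: "adj_rel E \<subseteq> (adj_rel E')\<^sup>*"
  proof (rule subrelI)
    fix x y assume "(x,y) \<in> adj_rel E"
    then have xy: "{x,y} \<in> E" unfolding adj_rel_def by simp
    show "(x,y) \<in> (adj_rel E')\<^sup>*"
    proof (cases "{x,y} = {u,c}")
      case True
      then have "(x = u \<and> y = c) \<or> (x = c \<and> y = u)" by (auto simp: doubleton_eq_iff)
      then show ?thesis using ucR rt_sym by blast
    next
      case False
      then have "(x,y) \<in> adj_rel E'" using xy unfolding E'_def adj_rel_def by simp
      then show ?thesis by blast
    qed
  qed
  then have allR: "(adj_rel E)\<^sup>* \<subseteq> (adj_rel E')\<^sup>*" by (rule rtrancl_subset_rtrancl)
  have cardE': "card E' = card E"
  proof -
    have "card E' = Suc (card (E - {{u,c}}))" unfolding E'_def using vcE fin by simp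
    also have "\<dots> = card E" using card.remove[OF fin uc] by simp
    finally show ?thesis .
  qed
  have treeE': "is_tree n E'"
    unfolding is_tree_def
  proof (intro conjI)
    show "n \<ge> 1" using t unfolding is_tree_def by simp
    show "E' \<subseteq> {e. \<exists>u v. e = {u, v} \<and> u \<noteq> v \<and> u < n \<and> v < n}"
      using t vc v cu unfolding is_tree_def E'_def by blast
    show "card E' = n - 1" using t cardE' unfolding is_tree_def by simp
    show "\<forall>x<n. \<forall>y<n. (x, y) \<in> (adj_rel E')\<^sup>*" using t allR unfolding is_tree_def by blast
  qed
  have chemE': "chemical_tree n E'"
    unfolding chemical_tree_def using treeE' d4 degE' unfolding D'_def by auto
  have nbE': "num_branching n E' = num_branching n E"
  proof -
    have "{x. x < n \<and> deg E' x > 2} = {x. x < n \<and> deg E x > 2}"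
      using degE' u(2) v(2) unfolding D'_def D_def by auto
    then show ?thesis unfolding num_branching_def by simp
  qed
  have CT: "E' \<in> CT_star n (num_branching n E)" unfolding CT_star_def using chemE' nbE' by simp
  have ssplit: "\<And>g::nat\<Rightarrow>nat. (\<Sum>x<n. g x) = g u + (g v + (\<Sum>x\<in>{..<n}-{u}-{v}. g x))"
  proof -
    fix g :: "nat \<Rightarrow> nat"
    have "(\<Sum>x<n. g x) = g u + (\<Sum>x\<in>{..<n}-{u}. g x)" using u by (simp add: sum.remove)
    moreover have "(\<Sum>x\<in>{..<n}-{u}. g x) = g v + (\<Sum>x\<in>{..<n}-{u}-{v}. g x)"
      using v uv by (subst sum.remove[of _ v]) auto
    ultimately show "(\<Sum>x<n. g x) = g u + (g v + (\<Sum>x\<in>{..<n}-{u}-{v}. g x))" by simp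
  qed
  have restM1: "(\<Sum>x\<in>{..<n}-{u}-{v}. (D' x)^2) = (\<Sum>x\<in>{..<n}-{u}-{v}. (D x)^2)"
    by (rule sum.cong) (auto simp: D'_def)
  have M1lt: "M1 n E < M1 n E'"
    unfolding M1_def using ssplit[of "\<lambda>x. (deg E' x)^2"] ssplit[of "\<lambda>x. (deg E x)^2"] restM1 degE' u(2) v(2) uv
    unfolding D'_def D_def by simp
  define rest where "rest = E - {{u,c}} - {{u,a}}"
  have ua0: "{u,a} \<in> E - {{u,c}}" using a ac by (auto simp: insert_commute doubleton_eq_iff)
  have sE: "(\<Sum>e\<in>E. prod D e) = prod D {u,c} + (prod D {u,a} + (\<Sum>e\<in>rest. prod D e))"
  proof -
    have "(\<Sum>e\<in>E. prod D e) = prod D {u,c} + (\<Sum>e\<in>E - {{u,c}}. prod D e)"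
      using fin uc by (simp add: sum.remove)
    moreover have "(\<Sum>e\<in>E - {{u,c}}. prod D e) = prod D {u,a} + (\<Sum>e\<in>rest. prod D e)"
      unfolding rest_def using fin ua0 by (subst sum.remove[of _ "{u,a}"]) auto
    ultimately show ?thesis by simp
  qed
  have sE': "(\<Sum>e\<in>E'. prod D' e) = prod D' {v,c} + (prod D' {u,a} + (\<Sum>e\<in>rest. prod D' e))"
  proof -
    have "(\<Sum>e\<in>E'. prod D' e) = prod D' {v,c} + (\<Sum>e\<in>E - {{u,c}}. prod D' e)"
      unfolding E'_def using fin vcE by simp
    moreover have "(\<Sum>e\<in>E - {{u,c}}. prod D' e) = prod D' {u,a} + (\<Sum>e\<in>rest. prod D' e)"
      unfolding rest_def using fin ua0 by (subst sum.remove[of _ "{u,a}"]) auto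
    ultimately show ?thesis by simp
  qed
  have finrest: "finite rest" unfolding rest_def using fin by simp
  define W where "W = (\<lambda>w. {v,w}) ` ({y. {y,v} \<in> E} - {u})"
  have Wsub: "W \<subseteq> rest"
  proof
    fix e assume "e \<in> W"
    then obtain w where w: "e = {v,w}" "{w,v} \<in> E" "w \<noteq> u" unfolding W_def by auto
    have "{v,w} \<in> E" using w(2) by (simp add: insert_commute)
    moreover have "{v,w} \<noteq> {u,c}" using uv vc by (auto simp: doubleton_eq_iff)
    moreover have "{v,w} \<noteq> {u,a}" using uv w(3) by (auto simp: doubleton_eq_iff)
    ultimately show "e \<in> rest" unfolding rest_def using w(1) by simp
  qed
  have cardW: "card W = card ({y. {y,v} \<in> E} - {u})"
    unfolding W_def by (rule card_image) (auto simp: inj_on_def doubleton_eq_iff)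
  have Dle: "\<And>x. x \<noteq> u \<Longrightarrow> D x \<le> D' x" using v(2) unfolding D'_def D_def by auto
  have pw1: "\<And>e. e \<in> rest \<Longrightarrow> prod D e \<le> prod D' e"
  proof -
    fix e assume e: "e \<in> rest"
    then have eE: "e \<in> E" unfolding rest_def by simp
    then obtain x y where xy: "e = {x,y}" "x \<noteq> y" using tree_edges[OF t] by blast
    have "x \<noteq> u"
    proof
      assume "x = u"
      then have "{u,y} \<in> E" using eE xy by simp
      then have "y = a \<or> y = c" using Nu'' by blast
      then show False using e xy \<open>x = u\<close> unfolding rest_def by auto
    qed
    moreover have "y \<noteq> u"
    proof
      assume "y = u"
      then have "{x,u} \<in> E" using eE xy by simp
      then have "x = a \<or> x = c" using Nu' by blast
      then show False using e xy \<open>y = u\<close> unfolding rest_def by (auto simp: insert_commute)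
    qed
    ultimately show "prod D e \<le> prod D' e" using xy Dle by (simp add: mult_le_mono)
  qed
  have pw2: "\<And>e. e \<in> W \<Longrightarrow> prod D e + 1 \<le> prod D' e"
  proof -
    fix e assume "e \<in> W"
    then obtain w where w: "e = {v,w}" "{w,v} \<in> E" "w \<noteq> u" unfolding W_def by auto
    have wv: "w \<noteq> v" using edge_lt[OF t w(2)] by simp
    have "D w \<ge> 1" using degpos[of v w] w(2) by (simp add: insert_commute)
    moreover have "D' w = D w" using wv w(3) unfolding D'_def by simp
    moreover have "D v = 3" "D' v = 4" using v(2) uv unfolding D_def D'_def by auto
    ultimately show "prod D e + 1 \<le> prod D' e" using w(1) wv by simp
  qed
  have restineq: "(\<Sum>e\<in>rest. prod D e) + card W \<le> (\<Sum>e\<in>rest. prod D' e)"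
  proof -
    have finW: "finite W" using finrest Wsub finite_subset by blast
    have "(\<Sum>e\<in>rest. prod D e) = (\<Sum>e\<in>rest - W. prod D e) + (\<Sum>e\<in>W. prod D e)"
      using sum.subset_diff[OF Wsub finrest] by simp
    moreover have "(\<Sum>e\<in>rest. prod D' e) = (\<Sum>e\<in>rest - W. prod D' e) + (\<Sum>e\<in>W. prod D' e)"
      using sum.subset_diff[OF Wsub finrest] by simp
    moreover have "(\<Sum>e\<in>rest - W. prod D e) \<le> (\<Sum>e\<in>rest - W. prod D' e)"
      using pw1 by (intro sum_mono) auto
    moreover have "(\<Sum>e\<in>W. prod D e + 1) \<le> (\<Sum>e\<in>W. prod D' e)"
      using pw2 by (intro sum_mono) auto
    moreover have "(\<Sum>e\<in>W. prod D e + 1) = (\<Sum>e\<in>W. prod D e) + card W"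
      by (subst sum.distrib) simp
    ultimately show ?thesis by linarith
  qed
  have Dc: "D c \<ge> 1" using degpos[OF uc] .
  have Du: "D u = 2" "D v = 3" using u v unfolding D_def by auto
  have p1: "prod D {u,c} = 2 * D c" using cu Du by simp
  have p2: "prod D' {v,c} = 4 * D c" using vc cu uv unfolding D'_def by simp
  have p3: "prod D {u,a} = 2 * D a" using au Du by simp
  have p4: "prod D' {u,a} = D' a" using au uv unfolding D'_def by simp
  have M2lt: "(\<Sum>e\<in>E. prod D e) < (\<Sum>e\<in>E'. prod D' e)"
  proof (cases "a = v")
    case True
    have "v \<in> {y. {y,u} \<in> E}" using a True by simp
    then have "u \<in> {y. {y,v} \<in> E}" by (simp add: insert_commute)
    then have "card W = 2" using cardW card.remove[OF Nfin[of v], of u] v(2) unfolding deg_def by simp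
    moreover have "D a = 3" "D' a = 4" using True Du uv unfolding D'_def by auto
    ultimately show ?thesis using sE sE' restineq p1 p2 p3 p4 Dc by linarith
  next
    case False
    have "u \<notin> {y. {y,v} \<in> E}"
    proof
      assume "u \<in> {y. {y,v} \<in> E}"
      then have "{v,u} \<in> E" by (simp add: insert_commute)
      then show False using Nu'[of v] False vc by simp
    qed
    then have "card W = 3" using cardW v(2) unfolding deg_def by simp
    moreover have "D a \<le> 4" using d4 au by simp
    moreover have "D' a = D a" using False au unfolding D'_def by simp
    ultimately show ?thesis using sE sE' restineq p1 p2 p3 p4 Dc by linarith
  qed
  have M2lt': "M2 n E < M2 n E'"
    using M2lt M2_alt[OF tree_edges[OF t]] M2_alt[OF tree_edges[OF treeE']] degE' unfolding D_def by simp
  show ?thesis using CT M1lt M2lt' unfolding E'_def by blast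
qed

theorem lemma7:
  fixes n b :: nat and T :: "nat set set"
  assumes "1 \<le> b" and "real b < real n / 2 - 1"
    and "T \<in> CT_star n b"
    and "(\<forall>T' \<in> CT_star n b. M1 n T' \<le> M1 n T) \<or> (\<forall>T' \<in> CT_star n b. M2 n T' \<le> M2 n T)"
  shows "\<not> ((\<exists>u<n. deg T u = 2) \<and> (\<exists>v<n. deg T v = 3))"
proof
  assume "(\<exists>u<n. deg T u = 2) \<and> (\<exists>v<n. deg T v = 3)"
  then obtain u v where u: "u < n" "deg T u = 2" and v: "v < n" "deg T v = 3" by blast
  have ct: "chemical_tree n T" and nb: "num_branching n T = b" using assms(3) unfolding CT_star_def by auto
  have t: "is_tree n T" using ct unfolding chemical_tree_def by simp
  have "card {y. {y,u} \<in> T} = 2" using u(2) unfolding deg_def .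
  then obtain a c where ac: "{y. {y,u} \<in> T} = {a,c}" "a \<noteq> c" by (auto simp: card_2_iff)
  have a: "{a,u} \<in> T" using ac(1) by blast
  have c: "{c,u} \<in> T" using ac(1) by blast
  have uac: "{u,a} \<in> T" "{u,c} \<in> T" using a c by (simp_all add: insert_commute)
  have "(u,v) \<in> (adj_rel T)\<^sup>*" using t u v unfolding is_tree_def by blast
  from split_reach[OF this uac ac(2)]
  obtain E' where E': "E' \<in> CT_star n b" "M1 n T < M1 n E'" "M2 n T < M2 n E'"
  proof
    assume h: "(u,v) \<in> (adj_rel (T - {{u,c}}))\<^sup>*"
    show ?thesis using improve[OF ct u v a c ac(2) h] nb that by blast
  next
    assume h: "(u,v) \<in> (adj_rel (T - {{u,a}}))\<^sup>*"
    have ca: "c \<noteq> a" using ac(2) by simp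
    show ?thesis using improve[OF ct u v c a ca h] nb that by blast
  qed
  then show False using assms(4) by (meson not_le)
qed

end
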